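(* Let $G$ be a finite simple graph on $[d]$, $k\ge1$, and let $f,g$ be $k$-colorings of an induced subgraph $G_0$ of $G$. The following are equivalent: (i) $f\sim_k g$ (as $k$-colorings of $G_0$); (ii) ${\bf x}_f-{\bf x}_g\in\langle [I_G]_2\rangle$; (iii) ${\bf x}_f-{\bf x}_g\in J_G$.
   Context: A $k$-coloring of a graph $H$ is a map $f:V(H)\to[k]$ (not necessarily surjective) with $f(u)\neq f(v)$ for every edge. A Kempe switching: for colors $i<j$ and a connected component $C$ of $H[f^{-1}(i)\cup f^{-1}(j)]$, interchange $i$ and $j$ on $C$. $f\sim_k g$ if $g$ is obtained from $f$ by a finite sequence of Kempe switchings (through $k$-colorings of $H$). A stable set of $G$ is a subset of $[d]$ with no edge of $G$ (including $\emptyset$ and singletons); $S(G)$ is the set of stable sets; $R[G]=\mathbb{K}[x_S : S\in S(G)]$ over a field $\mathbb{K}$, all variables of degree $1$. For a $k$-coloring $f$ of an induced subgraph $G[W]$, ${\bf x}_f=\prod_{\ell=1}^k x_{f^{-1}(\ell)}$. $I_G$ is the kernel of $\pi:R[G]\to\mathbb{K}[t_1,\dots,t_d,s]$, $\pi(x_S)=s\prod_{j\in S}t_j$; $\langle [I_G]_2\rangle$ is the ideal generated by the degree-$2$ homogeneous elements of $I_G$. $J_G$ is the ideal generated by all ${\bf x}_f-{\bf x}_g$ with $f,g$ $2$-colorings of a common induced subgraph of $G$. *)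

theory Defs
  imports Main "HOL-Library.Poly_Mapping"
begin

definition simple_graph_on :: "nat \<Rightarrow> (nat \<Rightarrow> nat \<Rightarrow> bool) \<Rightarrow> bool" where
  "simple_graph_on d adj \<longleftrightarrow>
     (\<forall>u v. adj u v \<longrightarrow> adj v u) \<and> (\<forall>u. \<not> adj u u) \<and>
     (\<forall>u v. adj u v \<longrightarrow> u \<in> {1..d} \<and> v \<in> {1..d})"

text \<open>A k-coloring of the induced subgraph G[W]: a map W \<rightarrow> [k] (values outside W irrelevant).\<close>
definition is_coloring :: "(nat \<Rightarrow> nat \<Rightarrow> bool) \<Rightarrow> nat set \<Rightarrow> nat \<Rightarrow> (nat \<Rightarrow> nat) \<Rightarrow> bool" where
  "is_coloring adj W k f \<longleftrightarrow>
     (\<forall>v\<in>W. f v \<in> {1..k}) \<and> (\<forall>u\<in>W. \<forall>v\<in>W. adj u v \<longrightarrow> f u \<noteq> f v)"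

definition component_of :: "(nat \<Rightarrow> nat \<Rightarrow> bool) \<Rightarrow> nat set \<Rightarrow> nat \<Rightarrow> nat set" where
  "component_of adj V u = {v. (\<lambda>a b. a \<in> V \<and> b \<in> V \<and> adj a b)\<^sup>*\<^sup>* u v}"

definition swap_colors :: "nat \<Rightarrow> nat \<Rightarrow> nat \<Rightarrow> nat" where
  "swap_colors i j c = (if c = i then j else if c = j then i else c)"

definition kempe_step :: "(nat \<Rightarrow> nat \<Rightarrow> bool) \<Rightarrow> nat set \<Rightarrow> nat \<Rightarrow> (nat \<Rightarrow> nat) \<Rightarrow> (nat \<Rightarrow> nat) \<Rightarrow> bool" where
  "kempe_step adj W k f g \<longleftrightarrow>
     is_coloring adj W k f \<and> is_coloring adj W k g \<and>
     (\<exists>i j u. 1 \<le> i \<and> i < j \<and> j \<le> k \<and>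
        u \<in> {v\<in>W. f v = i \<or> f v = j} \<and>
        (let C = component_of adj {v\<in>W. f v = i \<or> f v = j} u in
          \<forall>v. g v = (if v \<in> C then swap_colors i j (f v) else f v)))"

text \<open>Kempe equivalence f \<sim>_k g of k-colorings of G[W] (colorings compared on W only).\<close>
definition kempe_equiv :: "(nat \<Rightarrow> nat \<Rightarrow> bool) \<Rightarrow> nat set \<Rightarrow> nat \<Rightarrow> (nat \<Rightarrow> nat) \<Rightarrow> (nat \<Rightarrow> nat) \<Rightarrow> bool" where
  "kempe_equiv adj W k f g \<longleftrightarrow>
     (\<exists>h. (kempe_step adj W k)\<^sup>*\<^sup>* f h \<and> (\<forall>v\<in>W. h v = g v))"

definition stable_sets :: "nat \<Rightarrow> (nat \<Rightarrow> nat \<Rightarrow> bool) \<Rightarrow> nat set set" where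
  "stable_sets d adj = {S. S \<subseteq> {1..d} \<and> (\<forall>u\<in>S. \<forall>v\<in>S. \<not> adj u v)}"

text \<open>Multivariate polynomials over a field with variables indexed by 'v:
finitely supported maps from monomials (exponent vectors) to coefficients.\<close>
type_synonym ('v, 'a) mpoly = "('v \<Rightarrow>\<^sub>0 nat) \<Rightarrow>\<^sub>0 'a"

definition pvar :: "'v \<Rightarrow> ('v, 'a::comm_ring_1) mpoly" where
  "pvar x = Poly_Mapping.single (Poly_Mapping.single x 1) 1"

definition pconst :: "'a::comm_ring_1 \<Rightarrow> ('v, 'a) mpoly" where
  "pconst c = Poly_Mapping.single 0 c"

definition homogeneous_deg :: "nat \<Rightarrow> ('v, 'a::comm_ring_1) mpoly \<Rightarrow> bool" where
  "homogeneous_deg n p \<longleftrightarrow> (\<forall>m\<in>Poly_Mapping.keys p. (\<Sum>x\<in>Poly_Mapping.keys m. Poly_Mapping.lookup m x) = n)"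

inductive_set ideal_gen :: "'r::comm_ring_1 set \<Rightarrow> 'r set \<Rightarrow> 'r set" for A B where
  zero: "0 \<in> ideal_gen A B"
| step: "r \<in> A \<Longrightarrow> b \<in> B \<Longrightarrow> p \<in> ideal_gen A B \<Longrightarrow> r * b + p \<in> ideal_gen A B"

text \<open>R[G] = K[x_S : S stable]: polynomials only involving variables x_S, S stable.\<close>
definition RG :: "nat \<Rightarrow> (nat \<Rightarrow> nat \<Rightarrow> bool) \<Rightarrow> (nat set, 'a::field) mpoly set" where
  "RG d adj = {p. \<forall>m\<in>Poly_Mapping.keys p. Poly_Mapping.keys m \<subseteq> stable_sets d adj}"

text \<open>The map \<pi> : R[G] \<rightarrow> K[t_1..t_d, s], x_S \<mapsto> s \<prod>_{j\<in>S} t_j;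
the target variable None is s and Some j is t_j.\<close>
definition pi_map :: "(nat set, 'a::field) mpoly \<Rightarrow> (nat option, 'a) mpoly" where
  "pi_map p = (\<Sum>m\<in>Poly_Mapping.keys p. pconst (Poly_Mapping.lookup p m) *
      (\<Prod>S\<in>Poly_Mapping.keys m. (pvar None * (\<Prod>j\<in>S. pvar (Some j))) ^ Poly_Mapping.lookup m S))"

definition I_G :: "nat \<Rightarrow> (nat \<Rightarrow> nat \<Rightarrow> bool) \<Rightarrow> (nat set, 'a::field) mpoly set" where
  "I_G d adj = {p \<in> RG d adj. pi_map p = 0}"

definition I_G2_ideal :: "nat \<Rightarrow> (nat \<Rightarrow> nat \<Rightarrow> bool) \<Rightarrow> (nat set, 'a::field) mpoly set" where
  "I_G2_ideal d adj = ideal_gen (RG d adj) {p \<in> I_G d adj. homogeneous_deg 2 p}"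

definition xcol :: "nat set \<Rightarrow> nat \<Rightarrow> (nat \<Rightarrow> nat) \<Rightarrow> (nat set, 'a::field) mpoly" where
  "xcol W k f = (\<Prod>l\<in>{1..k}. pvar {v\<in>W. f v = l})"

definition J_G :: "nat \<Rightarrow> (nat \<Rightarrow> nat \<Rightarrow> bool) \<Rightarrow> (nat set, 'a::field) mpoly set" where
  "J_G d adj = ideal_gen (RG d adj)
     {xcol W 2 f - xcol W 2 g | W f g. W \<subseteq> {1..d} \<and> is_coloring adj W 2 f \<and> is_coloring adj W 2 g}"

end

theory Submission
  imports Defs "HOL-Library.Multiset"
begin


lemma pm_expand:
  "p = (\<Sum>m\<in>Poly_Mapping.keys p. Poly_Mapping.single m (Poly_Mapping.lookup p m))"
proof (rule poly_mapping_eqI)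
  fix k
  show "Poly_Mapping.lookup p k = Poly_Mapping.lookup (\<Sum>m\<in>Poly_Mapping.keys p. Poly_Mapping.single m (Poly_Mapping.lookup p m)) k"
    by (simp add: lookup_sum lookup_single when_def in_keys_iff)
qed

definition phi :: "'m set \<Rightarrow> ('m \<Rightarrow>\<^sub>0 'a::comm_ring_1) \<Rightarrow> 'a" where
  "phi C q = (\<Sum>m\<in>{m\<in>Poly_Mapping.keys q. m \<in> C}. Poly_Mapping.lookup q m)"

lemma phi_sup:
  assumes "finite M" "Poly_Mapping.keys q \<subseteq> M"
  shows "phi C q = (\<Sum>m\<in>{m\<in>M. m \<in> C}. Poly_Mapping.lookup q m)"
  unfolding phi_def
  by (rule sum.mono_neutral_left) (use assms in \<open>auto simp: in_keys_iff\<close>)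

lemma phi_add: "phi C (p + q) = phi C p + phi C q"
proof -
  let ?M = "Poly_Mapping.keys p \<union> Poly_Mapping.keys q"
  have "phi C (p + q) = (\<Sum>m\<in>{m\<in>?M. m \<in> C}. Poly_Mapping.lookup (p+q) m)"
    by (rule phi_sup) (use keys_add[of p q] in auto)
  moreover have "phi C p = (\<Sum>m\<in>{m\<in>?M. m \<in> C}. Poly_Mapping.lookup p m)"
    by (rule phi_sup) auto
  moreover have "phi C q = (\<Sum>m\<in>{m\<in>?M. m \<in> C}. Poly_Mapping.lookup q m)"
    by (rule phi_sup) auto
  ultimately show ?thesis by (simp add: lookup_add sum.distrib)
qed

lemma phi_zero [simp]: "phi C 0 = 0"
  by (simp add: phi_def)

lemma phi_uminus: "phi C (- q) = - phi C q"
  using phi_add[of C q "-q"] by (simp add: eq_neg_iff_add_eq_0 add.commute)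

lemma phi_diff: "phi C (p - q) = phi C p - phi C q"
  using phi_add[of C p "-q"] phi_uminus[of C q] by simp

lemma phi_sum: "phi C (sum g A) = (\<Sum>x\<in>A. phi C (g x))"
  by (induction A rule: infinite_finite_induct) (auto simp: phi_add)

lemma phi_single: "phi C (Poly_Mapping.single m c) = (if m \<in> C then c else 0)"
proof -
  have "phi C (Poly_Mapping.single m c) = (\<Sum>x\<in>{x\<in>{m}. x \<in> C}. Poly_Mapping.lookup (Poly_Mapping.single m c) x)"
    by (rule phi_sup) auto
  also have "\<dots> = (if m \<in> C then c else 0)"
  proof -
    have "{x\<in>{m}. x \<in> C} = (if m \<in> C then {m} else {})" by auto
    then show ?thesis by simp
  qed
  finally show ?thesis .
qed

lemma phi_mult_single:
  "phi C (Poly_Mapping.single l c * b) =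
     c * (\<Sum>a\<in>Poly_Mapping.keys b. if l + a \<in> C then Poly_Mapping.lookup b a else 0)"
proof -
  have "Poly_Mapping.single l c * b = Poly_Mapping.single l c * (\<Sum>a\<in>Poly_Mapping.keys b. Poly_Mapping.single a (Poly_Mapping.lookup b a))"
    by (rule arg_cong[where f="\<lambda>x. Poly_Mapping.single l c * x"], rule pm_expand)
  also have "\<dots> = (\<Sum>a\<in>Poly_Mapping.keys b. Poly_Mapping.single (l + a) (c * Poly_Mapping.lookup b a))"
    unfolding sum_distrib_left mult_single by (rule refl)
  finally have "phi C (Poly_Mapping.single l c * b) = (\<Sum>a\<in>Poly_Mapping.keys b. phi C (Poly_Mapping.single (l + a) (c * Poly_Mapping.lookup b a)))"
    by (simp only: phi_sum)
  also have "\<dots> = (\<Sum>a\<in>Poly_Mapping.keys b. c * (if l + a \<in> C then Poly_Mapping.lookup b a else 0))"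
    by (rule sum.cong) (auto simp: phi_single)
  finally show ?thesis by (simp only: sum_distrib_left)
qed

lemma phi_mult:
  "phi C (r * b) = (\<Sum>l\<in>Poly_Mapping.keys r. phi C (Poly_Mapping.single l (Poly_Mapping.lookup r l) * b))"
proof -
  have "r * b = (\<Sum>l\<in>Poly_Mapping.keys r. Poly_Mapping.single l (Poly_Mapping.lookup r l)) * b"
    by (rule arg_cong[where f="\<lambda>x. x * b"], rule pm_expand)
  then show ?thesis by (simp add: sum_distrib_right phi_sum)
qed

lemma ideal_phi:
  assumes "q \<in> ideal_gen A B"
    and "\<And>b l. b \<in> B \<Longrightarrow> (\<Sum>a\<in>Poly_Mapping.keys b. if l + a \<in> C then Poly_Mapping.lookup b a else 0) = 0"
  shows "phi C q = 0"
  using assms(1)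
proof induction
  case zero
  then show ?case by simp
next
  case (step r b p)
  have "phi C (r * b) = 0"
    apply (subst phi_mult)
    apply (rule sum.neutral)
    apply (simp only: phi_mult_single assms(2) step.hyps(2) mult_zero_right )
    apply simp
    done
  then show ?case by (simp add: phi_add step.IH)
qed



lemma prod_single_pm:
  "(\<Prod>x\<in>A. Poly_Mapping.single (g x) (1::'a::comm_ring_1)) = Poly_Mapping.single (\<Sum>x\<in>A. g x) 1"
  by (induction A rule: infinite_finite_induct) (auto simp: mult_single)

lemma power_single_pm:
  "(Poly_Mapping.single e (1::'a::comm_ring_1)) ^ n = Poly_Mapping.single (\<Sum>i<n. e) 1"
  by (induction n) (auto simp: mult_single add.commute)

definition eset :: "nat set \<Rightarrow> (nat option \<Rightarrow>\<^sub>0 nat)" where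
  "eset S = Poly_Mapping.single None 1 + (\<Sum>j\<in>S. Poly_Mapping.single (Some j) 1)"

definition Emon :: "(nat set \<Rightarrow>\<^sub>0 nat) \<Rightarrow> (nat option \<Rightarrow>\<^sub>0 nat)" where
  "Emon m = (\<Sum>S\<in>Poly_Mapping.keys m. (\<Sum>i<Poly_Mapping.lookup m S. eset S))"

lemma pvar_single: "pvar x = Poly_Mapping.single (Poly_Mapping.single x 1) 1"
  by (simp add: pvar_def)

lemma pi_map_eq:
  "(pi_map p :: (nat option, 'a::field) mpoly) =
     (\<Sum>m\<in>Poly_Mapping.keys p. Poly_Mapping.single (Emon m) (Poly_Mapping.lookup p m))"
proof -
  have A: "(pvar None * (\<Prod>j\<in>S. pvar (Some j)) :: (nat option, 'a) mpoly) = Poly_Mapping.single (eset S) 1" for S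
    by (simp add: pvar_single prod_single_pm mult_single eset_def)
  have B: "(\<Prod>S\<in>Poly_Mapping.keys m. (pvar None * (\<Prod>j\<in>S. pvar (Some j))) ^ Poly_Mapping.lookup m S :: (nat option, 'a) mpoly)
      = Poly_Mapping.single (Emon m) 1" for m
    by (simp add: A power_single_pm prod_single_pm Emon_def)
  show ?thesis
    unfolding pi_map_def B by (simp add: pconst_def mult_single)
qed

lemma lookup_pi_map:
  assumes "finite M" "Poly_Mapping.keys p \<subseteq> M"
  shows "Poly_Mapping.lookup (pi_map p :: (nat option, 'a::field) mpoly) w =
     (\<Sum>m\<in>{m\<in>M. Emon m = w}. Poly_Mapping.lookup p m)"
proof -
  have "Poly_Mapping.lookup (pi_map p :: (nat option, 'a::field) mpoly) w =
     (\<Sum>m\<in>Poly_Mapping.keys p. if Emon m = w then Poly_Mapping.lookup p m else 0)"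
    by (simp add: pi_map_eq lookup_sum lookup_single when_def)
  also have "\<dots> = (\<Sum>m\<in>M. if Emon m = w then Poly_Mapping.lookup p m else 0)"
    by (rule sum.mono_neutral_left) (use assms in \<open>auto simp: in_keys_iff\<close>)
  also have "\<dots> = (\<Sum>m\<in>{m\<in>M. Emon m = w}. Poly_Mapping.lookup p m)"
    by (simp add: sum.inter_filter assms(1))
  finally show ?thesis .
qed

lemma lookup_Ex:
  assumes "finite M" "Poly_Mapping.keys m \<subseteq> M"
  shows "Poly_Mapping.lookup (Emon m) x = (\<Sum>S\<in>M. Poly_Mapping.lookup m S * Poly_Mapping.lookup (eset S) x)"
proof -
  have "Poly_Mapping.lookup (Emon m) x = (\<Sum>S\<in>Poly_Mapping.keys m. Poly_Mapping.lookup m S * Poly_Mapping.lookup (eset S) x)"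
    by (simp add: Emon_def lookup_sum)
  also have "\<dots> = (\<Sum>S\<in>M. Poly_Mapping.lookup m S * Poly_Mapping.lookup (eset S) x)"
    by (rule sum.mono_neutral_left) (use assms in \<open>auto simp: in_keys_iff\<close>)
  finally show ?thesis .
qed

lemma lookup_eset_Some:
  "Poly_Mapping.lookup (eset S) (Some v) = (if finite S \<and> v \<in> S then 1 else 0)"
  by (cases "finite S") (auto simp: eset_def lookup_add lookup_sum lookup_single when_def)

lemma lookup_eset_None:
  "Poly_Mapping.lookup (eset S) None = 1"
  by (cases "finite S") (auto simp: eset_def lookup_add lookup_sum lookup_single when_def)

definition ind :: "nat set \<Rightarrow> nat \<Rightarrow> nat" where
  "ind S v = (if v \<in> S then 1 else 0)"

lemma lookup_Ex2_Some:
  assumes "finite S" "finite T"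
  shows "Poly_Mapping.lookup (Emon (Poly_Mapping.single S 1 + Poly_Mapping.single T 1)) (Some v) = ind S v + ind T v"
proof -
  let ?m = "Poly_Mapping.single S (1::nat) + Poly_Mapping.single T 1"
  have k: "Poly_Mapping.keys ?m \<subseteq> {S, T}"
    using keys_add[of "Poly_Mapping.single S (1::nat)" "Poly_Mapping.single T 1"] by auto
  show ?thesis
  proof (cases "S = T")
    case True
    then show ?thesis using lookup_Ex[OF _ k, of "Some v"] assms
      by (simp add: lookup_add lookup_eset_Some ind_def)
  next
    case False
    then show ?thesis using lookup_Ex[OF _ k, of "Some v"] assms
      by (simp add: lookup_add lookup_eset_Some ind_def lookup_single when_def)
  qed
qed

lemma lookup_Ex2_None:
  "Poly_Mapping.lookup (Emon (Poly_Mapping.single S 1 + Poly_Mapping.single T 1)) None = 2"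
proof -
  let ?m = "Poly_Mapping.single S (1::nat) + Poly_Mapping.single T 1"
  have k: "Poly_Mapping.keys ?m \<subseteq> {S, T}"
    using keys_add[of "Poly_Mapping.single S (1::nat)" "Poly_Mapping.single T 1"] by auto
  show ?thesis
  proof (cases "S = T")
    case True
    then show ?thesis using lookup_Ex[OF _ k, of None]
      by (simp add: lookup_add lookup_eset_None)
  next
    case False
    then show ?thesis using lookup_Ex[OF _ k, of None]
      by (simp add: lookup_add lookup_eset_None lookup_single when_def)
  qed
qed

lemma Ex2_eq:
  assumes "finite S" "finite T" "finite S'" "finite T'"
    and "\<And>v. ind S v + ind T v = ind S' v + ind T' v"
  shows "Emon (Poly_Mapping.single S 1 + Poly_Mapping.single T 1) = Emon (Poly_Mapping.single S' 1 + Poly_Mapping.single T' 1)"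
proof (rule poly_mapping_eqI)
  fix x show "Poly_Mapping.lookup (Emon (Poly_Mapping.single S 1 + Poly_Mapping.single T 1)) x =
    Poly_Mapping.lookup (Emon (Poly_Mapping.single S' 1 + Poly_Mapping.single T' 1)) x"
  proof (cases x)
    case None
    then show ?thesis by (simp only: lookup_Ex2_None)
  next
    case (Some v)
    then show ?thesis by (simp only: lookup_Ex2_Some assms)
  qed
qed

lemma Ex2_ind:
  assumes "finite S" "finite T" "finite S'" "finite T'"
    and "Emon (Poly_Mapping.single S 1 + Poly_Mapping.single T 1) = Emon (Poly_Mapping.single S' 1 + Poly_Mapping.single T' 1)"
  shows "ind S v + ind T v = ind S' v + ind T' v"
proof -
  have h: "Poly_Mapping.lookup (Emon (Poly_Mapping.single S 1 + Poly_Mapping.single T 1)) (Some v) =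
     Poly_Mapping.lookup (Emon (Poly_Mapping.single S' 1 + Poly_Mapping.single T' 1)) (Some v)"
    using assms(5) by (rule arg_cong)
  show ?thesis using h lookup_Ex2_Some[OF assms(1,2), of v] lookup_Ex2_Some[OF assms(3,4), of v]
    by metis
qed

definition ms :: "('b \<Rightarrow>\<^sub>0 nat) \<Rightarrow> 'b multiset" where
  "ms m = Abs_multiset (Poly_Mapping.lookup m)"

lemma count_ms [simp]: "count (ms m) x = Poly_Mapping.lookup m x"
proof -
  have "finite {x. 0 < Poly_Mapping.lookup m x}"
    using finite_keys[of m] by (simp add: in_keys_iff[symmetric] keys.rep_eq)
  then show ?thesis unfolding ms_def by (simp add: count_Abs_multiset)
qed

lemma ms_add [simp]: "ms (a + b) = ms a + ms b"
  by (rule multiset_eqI) (simp add: lookup_add)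

lemma ms_single_gen [simp]: "ms (Poly_Mapping.single S n) = replicate_mset n S"
  by (rule multiset_eqI) (simp add: lookup_single when_def)

lemma ms_single: "ms (Poly_Mapping.single S 1) = {#S#}"
  by simp

lemma ms_zero [simp]: "ms 0 = {#}"
  by (rule multiset_eqI) simp

lemma ms_inj: "ms a = ms b \<Longrightarrow> a = b"
  by (rule poly_mapping_eqI) (metis count_ms)

lemma set_ms: "set_mset (ms m) = Poly_Mapping.keys m"
  by (auto simp: set_mset_def in_keys_iff)

lemma size_ms: "size (ms m) = (\<Sum>x\<in>Poly_Mapping.keys m. Poly_Mapping.lookup m x)"
  by (simp add: size_multiset_overloaded_eq set_ms)

lemma ms_sum [simp]: "ms (sum g A) = sum (\<lambda>x. ms (g x)) A"
  by (induction A rule: infinite_finite_induct) auto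

lemma deg2_form:
  fixes m :: "'b \<Rightarrow>\<^sub>0 nat"
  assumes "(\<Sum>x\<in>Poly_Mapping.keys m. Poly_Mapping.lookup m x) = 2"
  shows "\<exists>S T. m = Poly_Mapping.single S 1 + Poly_Mapping.single T 1"
proof -
  have "size (ms m) = Suc (Suc 0)" using assms size_ms[of m] by simp
  then obtain S M1 where M1: "ms m = {#S#} + M1" "size M1 = Suc 0"
    by (rule size_mset_SucE)
  then obtain T M2 where M2: "M1 = {#T#} + M2" "size M2 = 0"
    by (metis size_mset_SucE)
  have "ms m = {#S, T#}" using M1 M2 by simp
  then have "ms m = ms (Poly_Mapping.single S 1 + Poly_Mapping.single T 1)" by simp
  then show ?thesis using ms_inj by blast
qed



definition Vij :: "nat set \<Rightarrow> (nat \<Rightarrow> nat) \<Rightarrow> nat \<Rightarrow> nat \<Rightarrow> nat set" where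
  "Vij W h i j = {v\<in>W. h v = i \<or> h v = j}"

definition swapD :: "nat set \<Rightarrow> nat \<Rightarrow> nat \<Rightarrow> (nat \<Rightarrow> nat) \<Rightarrow> nat \<Rightarrow> nat" where
  "swapD D i j h = (\<lambda>v. if v \<in> D then swap_colors i j (h v) else h v)"

definition closedD :: "(nat \<Rightarrow> nat \<Rightarrow> bool) \<Rightarrow> nat set \<Rightarrow> nat set \<Rightarrow> bool" where
  "closedD adj V D \<longleftrightarrow> D \<subseteq> V \<and> (\<forall>x\<in>D. \<forall>y\<in>V. adj x y \<longrightarrow> y \<in> D)"

lemma swap_colors_sym: "swap_colors i j c = swap_colors j i c"
  by (simp add: swap_colors_def)

lemma swap_colors_inv [simp]: "swap_colors i j (swap_colors i j c) = c"
  by (simp add: swap_colors_def)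

lemma swap_colors_inj: "swap_colors i j a = swap_colors i j b \<longleftrightarrow> a = b"
  by (auto simp: swap_colors_def)

lemma swap_colors_in: "c = i \<or> c = j \<Longrightarrow> swap_colors i j c = i \<or> swap_colors i j c = j"
  by (auto simp: swap_colors_def)

lemma swap_colors_out: "c \<noteq> i \<Longrightarrow> c \<noteq> j \<Longrightarrow> swap_colors i j c = c"
  by (auto simp: swap_colors_def)

lemma Vij_swapD: "D \<subseteq> Vij W h i j \<Longrightarrow> Vij W (swapD D i j h) i j = Vij W h i j"
  by (auto simp: Vij_def swapD_def swap_colors_def)

lemma swap_coloring:
  assumes sym: "\<And>u v. adj u v \<Longrightarrow> adj v u"
    and col: "is_coloring adj W k h" and ij: "i \<in> {1..k}" "j \<in> {1..k}"
    and cl: "closedD adj (Vij W h i j) D"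
  shows "is_coloring adj W k (swapD D i j h)"
  unfolding is_coloring_def
proof (intro conjI ballI impI)
  fix v assume v: "v \<in> W"
  show "swapD D i j h v \<in> {1..k}"
  proof (cases "v \<in> D")
    case True
    then have "h v = i \<or> h v = j" using cl by (auto simp: closedD_def Vij_def)
    then show ?thesis using True ij by (auto simp: swapD_def swap_colors_def)
  next
    case False
    then show ?thesis using col v by (auto simp: swapD_def is_coloring_def)
  qed
next
  fix u v assume u: "u \<in> W" and v: "v \<in> W" and a: "adj u v"
  have huv: "h u \<noteq> h v" using col u v a by (auto simp: is_coloring_def)
  show "swapD D i j h u \<noteq> swapD D i j h v"
  proof (cases "u \<in> D"; cases "v \<in> D")
    assume "u \<in> D" "v \<in> D"
    then show ?thesis using huv by (simp add: swapD_def swap_colors_inj)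
  next
    assume "u \<in> D" "v \<notin> D"
    then have "v \<notin> Vij W h i j" using cl a by (auto simp: closedD_def)
    then have "h v \<noteq> i" "h v \<noteq> j" using v by (auto simp: Vij_def)
    moreover have "h u = i \<or> h u = j" using \<open>u \<in> D\<close> cl by (auto simp: closedD_def Vij_def)
    ultimately show ?thesis using \<open>u \<in> D\<close> \<open>v \<notin> D\<close>
      by (auto simp: swapD_def swap_colors_def)
  next
    assume "u \<notin> D" "v \<in> D"
    then have "u \<notin> Vij W h i j" using cl sym[OF a] by (auto simp: closedD_def)
    then have "h u \<noteq> i" "h u \<noteq> j" using u by (auto simp: Vij_def)
    moreover have "h v = i \<or> h v = j" using \<open>v \<in> D\<close> cl by (auto simp: closedD_def Vij_def)
    ultimately show ?thesis using \<open>u \<notin> D\<close> \<open>v \<in> D\<close>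
      by (auto simp: swapD_def swap_colors_def)
  next
    assume "u \<notin> D" "v \<notin> D"
    then show ?thesis using huv by (simp add: swapD_def)
  qed
qed

lemma component_sub:
  assumes "u \<in> V" shows "component_of adj V u \<subseteq> V"
proof
  fix v assume "v \<in> component_of adj V u"
  then have "(\<lambda>a b. a \<in> V \<and> b \<in> V \<and> adj a b)\<^sup>*\<^sup>* u v" by (simp add: component_of_def)
  then show "v \<in> V" using assms by (induction rule: rtranclp_induct) auto
qed

lemma component_in_closed:
  assumes "closedD adj V D" "u \<in> D"
  shows "component_of adj V u \<subseteq> D"
proof
  fix v assume "v \<in> component_of adj V u"
  then have "(\<lambda>a b. a \<in> V \<and> b \<in> V \<and> adj a b)\<^sup>*\<^sup>* u v" by (simp add: component_of_def)
  then show "v \<in> D" using assms by (induction rule: rtranclp_induct) (auto simp: closedD_def)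
qed

lemma component_closed:
  assumes sym: "\<And>u v. adj u v \<Longrightarrow> adj v u" and "u \<in> V"
  shows "closedD adj V (component_of adj V u)"
  unfolding closedD_def
proof (intro conjI ballI impI)
  show "component_of adj V u \<subseteq> V" using component_sub[OF assms(2)] .
next
  fix x y assume x: "x \<in> component_of adj V u" and y: "y \<in> V" and a: "adj x y"
  have xV: "x \<in> V" using x component_sub[OF assms(2)] by auto
  have "(\<lambda>a b. a \<in> V \<and> b \<in> V \<and> adj a b)\<^sup>*\<^sup>* u x" using x by (simp add: component_of_def)
  then have "(\<lambda>a b. a \<in> V \<and> b \<in> V \<and> adj a b)\<^sup>*\<^sup>* u y"
    using xV y a by (simp add: rtranclp.rtrancl_into_rtrancl)
  then show "y \<in> component_of adj V u" by (simp add: component_of_def)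
qed

lemma closedD_diff:
  assumes sym: "\<And>u v. adj u v \<Longrightarrow> adj v u"
    and "closedD adj V D" "closedD adj V C"
  shows "closedD adj V (D - C)"
  using assms unfolding closedD_def by blast

lemma kempe_step_swap_component:
  assumes sym: "\<And>u v. adj u v \<Longrightarrow> adj v u"
    and col: "is_coloring adj W k h" and ij: "i \<in> {1..k}" "j \<in> {1..k}" "i \<noteq> j"
    and u: "u \<in> Vij W h i j"
  shows "kempe_step adj W k h (swapD (component_of adj (Vij W h i j) u) i j h)"
proof -
  let ?C = "component_of adj (Vij W h i j) u"
  have cl: "closedD adj (Vij W h i j) ?C" using component_closed[OF sym u] .
  have col2: "is_coloring adj W k (swapD ?C i j h)" using swap_coloring[OF sym col ij(1,2) cl] .
  show ?thesis
  proof (cases "i < j")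
    case True
    show ?thesis unfolding kempe_step_def Let_def
      apply (intro conjI col col2)
      apply (rule exI[of _ i], rule exI[of _ j], rule exI[of _ u])
      using True ij u unfolding Vij_def swapD_def by simp
  next
    case False
    then have "j < i" using ij by auto
    have V: "{v\<in>W. h v = j \<or> h v = i} = Vij W h i j" by (auto simp: Vij_def)
    show ?thesis unfolding kempe_step_def Let_def
      apply (intro conjI col col2)
      apply (rule exI[of _ j], rule exI[of _ i], rule exI[of _ u])
      using \<open>j < i\<close> ij u V unfolding swapD_def by (simp add: Vij_def swap_colors_sym[of j i])
  qed
qed

lemma kempe_step_col2: "kempe_step adj W k f g \<Longrightarrow> is_coloring adj W k g"
  unfolding kempe_step_def by (elim conjE)

lemma kempe_step_col1: "kempe_step adj W k f g \<Longrightarrow> is_coloring adj W k f"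
  unfolding kempe_step_def by (elim conjE)

lemma swap_closed_reach:
  assumes sym: "\<And>u v. adj u v \<Longrightarrow> adj v u" and finW: "finite W"
    and ij: "i \<in> {1..k}" "j \<in> {1..k}" "i \<noteq> j"
  shows "is_coloring adj W k h \<Longrightarrow> closedD adj (Vij W h i j) D \<Longrightarrow>
    (kempe_step adj W k)\<^sup>*\<^sup>* h (swapD D i j h)"
proof (induction "card D" arbitrary: h D rule: less_induct)
  case less
  show ?case
  proof (cases "D = {}")
    case True
    then have "swapD D i j h = h" by (simp add: swapD_def)
    then show ?thesis by simp
  next
    case False
    then obtain u where uD: "u \<in> D" by auto
    have DV: "D \<subseteq> Vij W h i j" using less.prems(2) by (simp add: closedD_def)
    then have u: "u \<in> Vij W h i j" using uD by auto
    let ?V = "Vij W h i j"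
    let ?C = "component_of adj ?V u"
    let ?h1 = "swapD ?C i j h"
    have st: "kempe_step adj W k h ?h1"
      using kempe_step_swap_component[OF sym less.prems(1) ij u] .
    have clC: "closedD adj ?V ?C" using component_closed[OF sym u] .
    have CD: "?C \<subseteq> D" using component_in_closed[OF less.prems(2) uD] .
    have col1: "is_coloring adj W k ?h1" using st by (rule kempe_step_col2)
    have V1: "Vij W ?h1 i j = ?V" by (rule Vij_swapD) (use clC in \<open>simp only: closedD_def\<close>)
    have cl2: "closedD adj (Vij W ?h1 i j) (D - ?C)"
      unfolding V1 by (rule closedD_diff[OF sym less.prems(2) clC])
    have "Vij W h i j \<subseteq> W" by (auto simp: Vij_def)
    then have finD: "finite D" using finite_subset[OF subset_trans[OF DV] finW] by blast
    have uC: "u \<in> ?C" unfolding component_of_def by (simp only: mem_Collect_eq rtranclp.rtrancl_refl)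
    have lt: "card (D - ?C) < card D"
      by (rule psubset_card_mono) (use finD uC uD in auto)
    have r: "(kempe_step adj W k)\<^sup>*\<^sup>* ?h1 (swapD (D - ?C) i j ?h1)"
      using less.hyps[OF lt col1 cl2] .
    have eq: "swapD (D - ?C) i j ?h1 = swapD D i j h"
      using CD by (auto simp: swapD_def fun_eq_iff)
    show ?thesis using converse_rtranclp_into_rtranclp[OF st r] eq by simp
  qed
qed



definition cls :: "nat set \<Rightarrow> (nat \<Rightarrow> nat) \<Rightarrow> nat \<Rightarrow> nat set" where
  "cls W h l = {v\<in>W. h v = l}"

definition msc :: "nat set \<Rightarrow> nat \<Rightarrow> (nat \<Rightarrow> nat) \<Rightarrow> nat set multiset" where
  "msc W k h = image_mset (cls W h) (mset_set {1..k})"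

lemma mset_set_remove:
  assumes "finite K" "i \<in> K"
  shows "mset_set K = add_mset i (mset_set (K - {i}))"
  using assms by (rule mset_set.remove)

lemma in_image_mset_set:
  assumes "finite K" "x \<in># image_mset f (mset_set K)"
  shows "\<exists>l\<in>K. f l = x"
  using assms by (auto simp: in_image_mset)

lemma cls_swap_global:
  "cls W (swapD (Vij W h i j) i j h) l = cls W h (swap_colors i j l)"
  by (auto simp: cls_def swapD_def Vij_def swap_colors_def)

lemma msc_swap_global:
  assumes "i \<in> {1..k}" "j \<in> {1..k}"
  shows "msc W k (swapD (Vij W h i j) i j h) = msc W k h"
proof -
  have inj: "inj_on (swap_colors i j) {1..k}"
    by (rule inj_onI) (simp add: swap_colors_inj)
  have img: "swap_colors i j ` {1..k} = {1..k}"
  proof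
    show "swap_colors i j ` {1..k} \<subseteq> {1..k}" using assms by (auto simp: swap_colors_def)
    show "{1..k} \<subseteq> swap_colors i j ` {1..k}"
    proof
      fix x assume "x \<in> {1..k}"
      then have "swap_colors i j x \<in> {1..k}" using assms by (auto simp: swap_colors_def)
      then show "x \<in> swap_colors i j ` {1..k}"
        using swap_colors_inv[of i j x] by (metis image_eqI)
    qed
  qed
  have "msc W k (swapD (Vij W h i j) i j h) = image_mset (cls W h \<circ> swap_colors i j) (mset_set {1..k})"
    unfolding msc_def by (rule image_mset_cong) (simp add: cls_swap_global)
  also have "\<dots> = image_mset (cls W h) (image_mset (swap_colors i j) (mset_set {1..k}))"
    by (simp add: image_mset.compositionality)
  also have "\<dots> = msc W k h"
    unfolding msc_def image_mset_mset_set[OF inj] img ..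
  finally show ?thesis .
qed

lemma closedD_full: "closedD adj V V"
  by (simp add: closedD_def)

lemma perm_reach:
  assumes sym: "\<And>u v. adj u v \<Longrightarrow> adj v u" and finW: "finite W"
    and colg: "is_coloring adj W k g"
  shows "is_coloring adj W k h \<Longrightarrow> msc W k h = msc W k g \<Longrightarrow>
    \<exists>h'. (kempe_step adj W k)\<^sup>*\<^sup>* h h' \<and> (\<forall>v\<in>W. h' v = g v)"
proof (induction "card {l\<in>{1..k}. cls W h l \<noteq> cls W g l}" arbitrary: h rule: less_induct)
  case less
  show ?case
  proof (cases "\<forall>v\<in>W. h v = g v")
    case True
    then show ?thesis by blast
  next
    case False
    then obtain v where v: "v \<in> W" "h v \<noteq> g v" by auto
    define i where "i = h v"
    define j where "j = g v"
    have iK: "i \<in> {1..k}" using less.prems(1) v unfolding is_coloring_def i_def by blast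
    have jK: "j \<in> {1..k}" using colg v unfolding is_coloring_def j_def by blast
    have ij: "i \<noteq> j" using v by (simp add: i_def j_def)
    have "cls W g j \<in># msc W k g" using jK by (simp add: msc_def)
    then have "cls W g j \<in># msc W k h" using less.prems(2) by simp
    then have "\<exists>l\<in>{1..k}. cls W h l = cls W g j"
      unfolding msc_def by (intro in_image_mset_set) simp_all
    then obtain m where m: "m \<in> {1..k}" "cls W h m = cls W g j" by blast
    have "v \<in> cls W g j" using v by (simp add: cls_def j_def)
    then have "v \<in> cls W h m" using m by simp
    then have "m = i" by (simp add: cls_def i_def)
    then have hij: "cls W h i = cls W g j" using m by simp
    let ?h2 = "swapD (Vij W h i j) i j h"
    have r1: "(kempe_step adj W k)\<^sup>*\<^sup>* h ?h2"
      using swap_closed_reach[OF sym finW iK jK ij less.prems(1) closedD_full] .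
    have col2: "is_coloring adj W k ?h2"
      using swap_coloring[OF sym less.prems(1) iK jK closedD_full] .
    have msc2: "msc W k ?h2 = msc W k g"
      using msc_swap_global[OF iK jK] less.prems(2) by simp
    let ?B = "\<lambda>h. {l\<in>{1..k}. cls W h l \<noteq> cls W g l}"
    have jB: "j \<in> ?B h"
    proof -
      have "v \<notin> cls W h j" using ij by (simp add: cls_def i_def)
      then show ?thesis using jK \<open>v \<in> cls W g j\<close> by auto
    qed
    have iB: "i \<in> ?B h"
    proof -
      have "v \<notin> cls W g i" using ij by (simp add: cls_def j_def)
      then show ?thesis using iK \<open>v \<in> cls W g j\<close> hij by auto
    qed
    have sub: "?B ?h2 \<subseteq> ?B h - {j}"
    proof
      fix l assume l: "l \<in> ?B ?h2"
      then have lK: "l \<in> {1..k}" and ne: "cls W ?h2 l \<noteq> cls W g l" by auto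
      have e: "cls W ?h2 l = cls W h (swap_colors i j l)" by (rule cls_swap_global)
      show "l \<in> ?B h - {j}"
      proof (cases "l = j")
        case True
        then have "cls W ?h2 l = cls W h i" using e by (simp add: swap_colors_def)
        then show ?thesis using ne hij True by simp
      next
        case False
        show ?thesis
        proof (cases "l = i")
          case True
          then show ?thesis using iB False by simp
        next
          case False2: False
          then have "cls W ?h2 l = cls W h l" using e \<open>l \<noteq> j\<close> by (simp add: swap_colors_def)
          then show ?thesis using ne lK \<open>l \<noteq> j\<close> by simp
        qed
      qed
    qed
    have lt: "card (?B ?h2) < card (?B h)"
    proof -
      have "?B ?h2 \<subset> ?B h" using sub jB by blast
      then show ?thesis by (rule psubset_card_mono[rotated]) simp
    qed
    obtain h' where h': "(kempe_step adj W k)\<^sup>*\<^sup>* ?h2 h'" "\<forall>v\<in>W. h' v = g v"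
      using less.hyps[OF lt col2 msc2] by blast
    show ?thesis using rtranclp_trans[OF r1 h'(1)] h'(2) by blast
  qed
qed

lemma ind_facts:
  assumes "S \<inter> T = {}" "\<And>v. ind S v + ind T v = ind S' v + ind T' v"
  shows "S \<union> T = S' \<union> T'" "S' \<inter> T' = {}"
proof -
  have a: "(v \<in> S \<or> v \<in> T) \<longleftrightarrow> (v \<in> S' \<or> v \<in> T')" for v
    using assms(2)[of v] by (auto simp: ind_def split: if_splits)
  have b: "\<not> (v \<in> S' \<and> v \<in> T')" for v
    using assms(2)[of v] assms(1) by (auto simp: ind_def split: if_splits)
  show "S \<union> T = S' \<union> T'" using a by blast
  show "S' \<inter> T' = {}" using b by blast
qed



lemma msc_split:
  assumes "i \<in> {1..k}"
  shows "msc W k h = add_mset (cls W h i) (image_mset (cls W h) (mset_set ({1..k} - {i})))"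
  unfolding msc_def using mset_set_remove[of "{1..k}" i] assms by simp

lemma closure_step:
  assumes sym: "\<And>u v. adj u v \<Longrightarrow> adj v u" and finW: "finite W"
    and col: "is_coloring adj W k h"
    and hm: "msc W k h = L + {#S, T#}"
    and stS': "\<forall>u\<in>S'. \<forall>v\<in>S'. \<not> adj u v" and stT': "\<forall>u\<in>T'. \<forall>v\<in>T'. \<not> adj u v"
    and ind: "\<And>v. ind S v + ind T v = ind S' v + ind T' v"
  shows "\<exists>h'. (kempe_step adj W k)\<^sup>*\<^sup>* h h' \<and> msc W k h' = L + {#S', T'#}"
proof -
  let ?K = "{1..k}"
  have "S \<in># msc W k h" using hm by simp
  then have "\<exists>l\<in>?K. cls W h l = S" unfolding msc_def by (intro in_image_mset_set) simp_all
  then obtain i where iK: "i \<in> ?K" and hi: "cls W h i = S" by blast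
  have "add_mset S (image_mset (cls W h) (mset_set (?K - {i}))) = add_mset S (L + {#T#})"
    using msc_split[OF iK, of W h] hm hi by simp
  then have m1: "image_mset (cls W h) (mset_set (?K - {i})) = L + {#T#}" by simp
  then have "T \<in># image_mset (cls W h) (mset_set (?K - {i}))" by simp
  then have "\<exists>l\<in>?K - {i}. cls W h l = T" by (intro in_image_mset_set) simp_all
  then obtain j where jK: "j \<in> ?K" and ji: "j \<noteq> i" and hj: "cls W h j = T" by blast
  have "image_mset (cls W h) (mset_set (?K - {i})) =
      add_mset T (image_mset (cls W h) (mset_set (?K - {i} - {j})))"
    using mset_set_remove[of "?K - {i}" j] jK ji hj by simp
  then have mL: "image_mset (cls W h) (mset_set (?K - {i} - {j})) = L" using m1 by simp
  have ST: "S \<inter> T = {}" using ji hi hj by (auto simp: cls_def)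
  have U: "S \<union> T = S' \<union> T'" and ST': "S' \<inter> T' = {}" using ind_facts[OF ST ind] by auto
  have SW: "S \<union> T \<subseteq> W" using hi hj by (auto simp: cls_def)
  define h' where "h' = (\<lambda>v. if v \<in> S' then i else if v \<in> T' then j else h v)"
  have hST: "v \<in> S \<union> T \<longleftrightarrow> v \<in> W \<and> (h v = i \<or> h v = j)" for v
    using hi hj by (auto simp: cls_def)
  have ci: "cls W h' i = S'"
  proof
    show "cls W h' i \<subseteq> S'"
    proof
      fix v assume "v \<in> cls W h' i"
      then have v: "v \<in> W" "h' v = i" by (auto simp: cls_def)
      show "v \<in> S'"
      proof (rule ccontr)
        assume "v \<notin> S'"
        then have "v \<in> T' \<or> (v \<notin> T' \<and> h v = i)" using v ji by (auto simp: h'_def split: if_splits)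
        then show False
        proof
          assume "v \<in> T'" then show False using v \<open>v \<notin> S'\<close> ji by (simp add: h'_def)
        next
          assume "v \<notin> T' \<and> h v = i"
          then have "v \<in> S \<union> T" using hST v by blast
          then show False using U \<open>v \<notin> S'\<close> \<open>v \<notin> T' \<and> h v = i\<close> by blast
        qed
      qed
    qed
    show "S' \<subseteq> cls W h' i" using U SW by (auto simp: cls_def h'_def)
  qed
  have cj: "cls W h' j = T'"
  proof
    show "cls W h' j \<subseteq> T'"
    proof
      fix v assume "v \<in> cls W h' j"
      then have v: "v \<in> W" "h' v = j" by (auto simp: cls_def)
      show "v \<in> T'"
      proof (rule ccontr)
        assume nT: "v \<notin> T'"
        have nS: "v \<notin> S'" using v ji by (auto simp: h'_def)
        then have "h v = j" using v nT by (simp add: h'_def)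
        then have "v \<in> S \<union> T" using hST v by blast
        then show False using U nS nT by blast
      qed
    qed
    show "T' \<subseteq> cls W h' j" using U SW ST' by (auto simp: cls_def h'_def)
  qed
  have cl: "cls W h' l = cls W h l" if "l \<noteq> i" "l \<noteq> j" for l
  proof -
    have "h' v = l \<longleftrightarrow> h v = l" if "v \<in> W" for v
    proof (cases "v \<in> S' \<union> T'")
      case True
      then have "h v = i \<or> h v = j" using U hST by blast
      moreover have "h' v = i \<or> h' v = j" using True by (auto simp: h'_def)
      ultimately show ?thesis using \<open>l \<noteq> i\<close> \<open>l \<noteq> j\<close> by auto
    next
      case False
      then show ?thesis by (simp add: h'_def)
    qed
    then show ?thesis by (auto simp: cls_def)
  qed
  have colh: "\<forall>v\<in>W. h v \<in> ?K" and adjh: "\<forall>u\<in>W. \<forall>v\<in>W. adj u v \<longrightarrow> h u \<noteq> h v"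
    using col by (auto simp: is_coloring_def)
  have col': "is_coloring adj W k h'"
    unfolding is_coloring_def
  proof (intro conjI ballI impI)
    fix v assume "v \<in> W"
    then show "h' v \<in> ?K" using iK jK colh by (simp add: h'_def)
  next
    fix u v assume u: "u \<in> W" and v: "v \<in> W" and a: "adj u v"
    show "h' u \<noteq> h' v"
    proof
      assume eq: "h' u = h' v"
      have "u \<in> cls W h' (h' u)" "v \<in> cls W h' (h' u)" using u v eq by (auto simp: cls_def)
      show False
      proof (cases "h' u = i")
        case True
        then have "u \<in> S'" "v \<in> S'" using \<open>u \<in> cls W h' (h' u)\<close> \<open>v \<in> cls W h' (h' u)\<close> ci by auto
        then show False using stS' a by blast
      next
        case Fi: False
        show False
        proof (cases "h' u = j")
          case True
          then have "u \<in> T'" "v \<in> T'" using \<open>u \<in> cls W h' (h' u)\<close> \<open>v \<in> cls W h' (h' u)\<close> cj by auto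
          then show False using stT' a by blast
        next
          case False
          then have "u \<in> cls W h (h' u)" "v \<in> cls W h (h' u)"
            using \<open>u \<in> cls W h' (h' u)\<close> \<open>v \<in> cls W h' (h' u)\<close> cl[OF Fi False] by auto
          then show False using adjh u v a unfolding cls_def by (metis (mono_tags, lifting) mem_Collect_eq)
        qed
      qed
    qed
  qed
  define D where "D = {v\<in>W. (h v = i \<or> h v = j) \<and> h' v \<noteq> h v}"
  have h'D: "h' = swapD D i j h"
  proof
    fix v
    show "h' v = swapD D i j h v"
    proof (cases "v \<in> S \<union> T")
      case True
      then have v: "v \<in> W" "h v = i \<or> h v = j" using hST by auto
      have "h' v = i \<or> h' v = j" using True U by (auto simp: h'_def)
      then show ?thesis using v ji by (auto simp: swapD_def D_def swap_colors_def)
    next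
      case False
      then have "v \<notin> S'" "v \<notin> T'" using U by auto
      moreover have "v \<notin> D" using False hST by (auto simp: D_def)
      ultimately show ?thesis by (simp add: h'_def swapD_def)
    qed
  qed
  have clD: "closedD adj (Vij W h i j) D"
    unfolding closedD_def
  proof (intro conjI ballI impI)
    show "D \<subseteq> Vij W h i j" by (auto simp: D_def Vij_def)
  next
    fix x y assume x: "x \<in> D" and y: "y \<in> Vij W h i j" and a: "adj x y"
    show "y \<in> D"
    proof (rule ccontr)
      assume ny: "y \<notin> D"
      have xW: "x \<in> W" and hx: "h x = i \<or> h x = j"
        using x by (auto simp: D_def)
      have hx': "h' x = swap_colors i j (h x)"
        using fun_cong[OF h'D, of x] x by (simp add: swapD_def)
      have yW: "y \<in> W" and hy: "h y = i \<or> h y = j" using y by (auto simp: Vij_def)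
      have hy': "h' y = h y" using ny h'D by (simp add: swapD_def)
      have "h x \<noteq> h y" using adjh xW yW a by blast
      then have "h y = swap_colors i j (h x)" using hx hy by (auto simp: swap_colors_def)
      then have "h' x = h' y" using hx' hy' by simp
      then show False using col' xW yW a by (auto simp: is_coloring_def)
    qed
  qed
  have reach: "(kempe_step adj W k)\<^sup>*\<^sup>* h h'"
    using swap_closed_reach[OF sym finW iK jK ji[symmetric] col clD] h'D by simp
  have "msc W k h' = add_mset S' (add_mset T' (image_mset (cls W h') (mset_set (?K - {i} - {j}))))"
    using msc_split[OF iK, of W h'] mset_set_remove[of "?K - {i}" j] jK ji ci cj by simp
  also have "image_mset (cls W h') (mset_set (?K - {i} - {j})) = L"
  proof -
    have "image_mset (cls W h') (mset_set (?K - {i} - {j})) = image_mset (cls W h) (mset_set (?K - {i} - {j}))"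
      by (rule image_mset_cong) (use cl in auto)
    then show ?thesis using mL by simp
  qed
  finally have "msc W k h' = L + {#S', T'#}" by simp
  then show ?thesis using reach by blast
qed



definition monoh :: "nat set \<Rightarrow> nat \<Rightarrow> (nat \<Rightarrow> nat) \<Rightarrow> (nat set \<Rightarrow>\<^sub>0 nat)" where
  "monoh W k h = (\<Sum>l\<in>{1..k}. Poly_Mapping.single (cls W h l) 1)"

lemma xcol_eq: "(xcol W k h :: (nat set, 'a::field) mpoly) = Poly_Mapping.single (monoh W k h) 1"
  unfolding xcol_def monoh_def pvar_single cls_def by (rule prod_single_pm)

lemma image_mset_mset_set_sum:
  "image_mset f (mset_set A) = (\<Sum>x\<in>A. {#f x#})"
  by (induction A rule: infinite_finite_induct) auto

lemma ms_monoh: "ms (monoh W k h) = msc W k h"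
  unfolding monoh_def msc_def by (simp add: image_mset_mset_set_sum)

lemma stable_cls:
  assumes "is_coloring adj W k h" "W \<subseteq> {1..d}"
  shows "cls W h l \<in> stable_sets d adj"
  unfolding stable_sets_def cls_def
proof (intro CollectI conjI ballI)
  show "{v \<in> W. h v = l} \<subseteq> {1..d}" using assms(2) by auto
next
  fix u v assume u: "u \<in> {v \<in> W. h v = l}" and v: "v \<in> {v \<in> W. h v = l}"
  show "\<not> adj u v"
  proof
    assume "adj u v"
    then have "h u \<noteq> h v" using assms(1) u v unfolding is_coloring_def by blast
    then show False using u v by simp
  qed
qed

lemma reach_col:
  assumes "(kempe_step adj W k)\<^sup>*\<^sup>* f h" "is_coloring adj W k f"
  shows "is_coloring adj W k h"
  using assms by (induction rule: rtranclp_induct) (auto dest: kempe_step_col2)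

lemma keys_two:
  "S \<in> Poly_Mapping.keys (Poly_Mapping.single S (1::nat) + Poly_Mapping.single T 1)"
  "T \<in> Poly_Mapping.keys (Poly_Mapping.single S (1::nat) + Poly_Mapping.single T 1)"
  by (auto simp: in_keys_iff lookup_add lookup_single when_def)

lemma keys_two_sub:
  "Poly_Mapping.keys (Poly_Mapping.single S (1::nat) + Poly_Mapping.single T 1) \<subseteq> {S, T}"
  using keys_add[of "Poly_Mapping.single S (1::nat)" "Poly_Mapping.single T 1"] by auto

lemma stable_finite: "S \<in> stable_sets d adj \<Longrightarrow> finite S"
  unfolding stable_sets_def using finite_subset[of S "{1..d}"] by simp

lemma kernel_sum:
  assumes pi0: "(pi_map b :: (nat option, 'a::field) mpoly) = 0"
    and clo: "\<And>a a'. a \<in> Poly_Mapping.keys b \<Longrightarrow> a' \<in> Poly_Mapping.keys b \<Longrightarrow> Emon a = Emon a' \<Longrightarrow> l + a \<in> C \<Longrightarrow> l + a' \<in> C"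
  shows "(\<Sum>a\<in>Poly_Mapping.keys b. if l + a \<in> C then Poly_Mapping.lookup b a else 0) = 0"
proof -
  let ?A = "{a\<in>Poly_Mapping.keys b. l + a \<in> C}"
  have "(\<Sum>a\<in>Poly_Mapping.keys b. if l + a \<in> C then Poly_Mapping.lookup b a else 0) = (\<Sum>a\<in>?A. Poly_Mapping.lookup b a)"
    by (simp add: sum.inter_filter)
  also have "\<dots> = (\<Sum>w\<in>Emon ` ?A. \<Sum>a\<in>{x. x \<in> ?A \<and> Emon x = w}. Poly_Mapping.lookup b a)"
    by (rule sum.image_gen) simp
  also have "\<dots> = (\<Sum>w\<in>Emon ` ?A. 0)"
  proof (rule sum.cong[OF refl])
    fix w assume w: "w \<in> Emon ` ?A"
    then obtain a0 where a0: "a0 \<in> ?A" "Emon a0 = w" by blast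
    have "{x. x \<in> ?A \<and> Emon x = w} = {x\<in>Poly_Mapping.keys b. Emon x = w}"
      using a0 clo by blast
    moreover have "(\<Sum>x\<in>{x\<in>Poly_Mapping.keys b. Emon x = w}. Poly_Mapping.lookup b x) = 0"
      using lookup_pi_map[of "Poly_Mapping.keys b" b w] pi0 by simp
    ultimately show "(\<Sum>a\<in>{x. x \<in> ?A \<and> Emon x = w}. Poly_Mapping.lookup b a) = 0" by simp
  qed
  finally show ?thesis by simp
qed

lemma ii_to_i:
  assumes sym: "\<And>u v. adj u v \<Longrightarrow> adj v u" and Wd: "W \<subseteq> {1..d}"
    and colf: "is_coloring adj W k f" and colg: "is_coloring adj W k g"
    and mem: "(xcol W k f - xcol W k g :: (nat set, 'a::field) mpoly) \<in> I_G2_ideal d adj"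
  shows "kempe_equiv adj W k f g"
proof -
  have finW: "finite W" using finite_subset[OF Wd] by simp
  define C where "C = {\<mu>. \<exists>h. (kempe_step adj W k)\<^sup>*\<^sup>* f h \<and> ms \<mu> = msc W k h}"
  have key: "(\<Sum>a\<in>Poly_Mapping.keys b. if l + a \<in> C then Poly_Mapping.lookup b a else 0) = 0"
    if b: "b \<in> {p \<in> I_G d adj. homogeneous_deg 2 p}" for b :: "(nat set, 'a) mpoly" and l
  proof (rule kernel_sum)
    show "(pi_map b :: (nat option, 'a) mpoly) = 0" using b by (simp add: I_G_def)
  next
    fix a a' assume a: "a \<in> Poly_Mapping.keys b" and a': "a' \<in> Poly_Mapping.keys b"
      and E: "Emon a = Emon a'" and la: "l + a \<in> C"
    have RG: "b \<in> RG d adj" and hom: "homogeneous_deg 2 b" using b by (auto simp: I_G_def)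
    obtain S T where aST: "a = Poly_Mapping.single S 1 + Poly_Mapping.single T 1"
      using deg2_form hom a unfolding homogeneous_deg_def by blast
    obtain S' T' where aST': "a' = Poly_Mapping.single S' 1 + Poly_Mapping.single T' 1"
      using deg2_form hom a' unfolding homogeneous_deg_def by blast
    have ka: "Poly_Mapping.keys a \<subseteq> stable_sets d adj" "Poly_Mapping.keys a' \<subseteq> stable_sets d adj"
      using RG a a' unfolding RG_def by blast+
    have kS: "S \<in> Poly_Mapping.keys a" "T \<in> Poly_Mapping.keys a" unfolding aST by (rule keys_two)+
    have kS': "S' \<in> Poly_Mapping.keys a'" "T' \<in> Poly_Mapping.keys a'" unfolding aST' by (rule keys_two)+
    have st: "S \<in> stable_sets d adj" "T \<in> stable_sets d adj" "S' \<in> stable_sets d adj" "T' \<in> stable_sets d adj"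
      using subsetD[OF ka(1) kS(1)] subsetD[OF ka(1) kS(2)] subsetD[OF ka(2) kS'(1)] subsetD[OF ka(2) kS'(2)] .
    have fin: "finite S" "finite T" "finite S'" "finite T'"
      using stable_finite[OF st(1)] stable_finite[OF st(2)] stable_finite[OF st(3)] stable_finite[OF st(4)] .
    have ind: "ind S v + ind T v = ind S' v + ind T' v" for v
      using Ex2_ind[OF fin] E aST aST' by simp
    obtain h where h: "(kempe_step adj W k)\<^sup>*\<^sup>* f h" "ms (l + a) = msc W k h"
      using la by (auto simp: C_def)
    have colh: "is_coloring adj W k h" using reach_col[OF h(1) colf] .
    have hm: "msc W k h = ms l + {#S, T#}" using h(2) aST by (simp add: add_mset_commute)
    have stS': "\<forall>u\<in>S'. \<forall>v\<in>S'. \<not> adj u v" and stT': "\<forall>u\<in>T'. \<forall>v\<in>T'. \<not> adj u v"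
      using st by (auto simp: stable_sets_def)
    obtain h'' where h'': "(kempe_step adj W k)\<^sup>*\<^sup>* h h''" "msc W k h'' = ms l + {#S', T'#}"
      using closure_step[OF sym finW colh hm stS' stT' ind] by blast
    have "ms (l + a') = msc W k h''" using h''(2) aST' by simp
    then show "l + a' \<in> C" unfolding C_def using rtranclp_trans[OF h(1) h''(1)] by blast
  qed
  have phi0: "phi C (xcol W k f - xcol W k g :: (nat set, 'a) mpoly) = 0"
    using mem unfolding I_G2_ideal_def by (rule ideal_phi) (rule key)
  have fC: "monoh W k f \<in> C" unfolding C_def by (auto simp: ms_monoh)
  have "phi C (xcol W k f - xcol W k g :: (nat set, 'a) mpoly) = 1 - (if monoh W k g \<in> C then 1 else 0)"
    by (simp add: xcol_eq phi_diff phi_single fC)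
  then have "monoh W k g \<in> C" using phi0 by (auto split: if_splits)
  then obtain h where h: "(kempe_step adj W k)\<^sup>*\<^sup>* f h" "msc W k g = msc W k h"
    by (auto simp: C_def ms_monoh)
  have colh: "is_coloring adj W k h" using reach_col[OF h(1) colf] .
  obtain h' where h': "(kempe_step adj W k)\<^sup>*\<^sup>* h h'" "\<forall>v\<in>W. h' v = g v"
    using perm_reach[OF sym finW colg colh h(2)[symmetric]] by blast
  show ?thesis unfolding kempe_equiv_def using rtranclp_trans[OF h(1) h'(1)] h'(2) by blast
qed



lemma ideal_add:
  assumes "p \<in> ideal_gen A B" "q \<in> ideal_gen A B"
  shows "p + q \<in> ideal_gen A B"
  using assms(1)
proof induction
  case zero
  then show ?case using assms(2) by simp
next
  case (step r b p)
  have "r * b + p + q = r * b + (p + q)" by (simp add: add.assoc)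
  then show ?case using ideal_gen.step[OF step.hyps(1,2) step.IH] by metis
qed

lemma ideal_mono:
  assumes "p \<in> ideal_gen A B" "B \<subseteq> B'"
  shows "p \<in> ideal_gen A B'"
  using assms(1)
proof induction
  case zero
  then show ?case by (rule ideal_gen.zero)
next
  case (step r b p)
  then show ?case using assms(2) by (auto intro: ideal_gen.step)
qed

lemma monoh2:
  "monoh W 2 f = Poly_Mapping.single (cls W f 1) 1 + Poly_Mapping.single (cls W f 2) 1"
proof -
  have "{1..2::nat} = {1, 2}" by auto
  then show ?thesis unfolding monoh_def by simp
qed

lemma keys_monoh_stable:
  assumes "is_coloring adj W k h" "W \<subseteq> {1..d}"
  shows "Poly_Mapping.keys (monoh W k h) \<subseteq> stable_sets d adj"
proof -
  have "Poly_Mapping.keys (monoh W k h) \<subseteq> (\<Union>l\<in>{1..k}. Poly_Mapping.keys (Poly_Mapping.single (cls W h l) (1::nat)))"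
    unfolding monoh_def by (rule keys_sum)
  also have "\<dots> \<subseteq> stable_sets d adj" using stable_cls[OF assms] by auto
  finally show ?thesis .
qed

lemma diff_J:
  assumes Wd: "W \<subseteq> {1..d}" and colh: "is_coloring adj W k h" and colh': "is_coloring adj W k h'"
    and iK: "i \<in> {1..k}" and jK: "j \<in> {1..k}" and ij: "i \<noteq> j"
    and same: "\<And>l. l \<in> {1..k} \<Longrightarrow> l \<noteq> i \<Longrightarrow> l \<noteq> j \<Longrightarrow> cls W h' l = cls W h l"
    and V: "Vij W h' i j = Vij W h i j"
  shows "(xcol W k h - xcol W k h' :: (nat set, 'a::field) mpoly) \<in> J_G d adj"
proof -
  let ?K' = "{1..k} - {i} - {j}"
  define R where "R = (\<Sum>l\<in>?K'. Poly_Mapping.single (cls W h l) (1::nat))"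
  have split: "monoh W k g = Poly_Mapping.single (cls W g i) 1 + (Poly_Mapping.single (cls W g j) 1 +
      (\<Sum>l\<in>?K'. Poly_Mapping.single (cls W g l) 1))" for g
  proof -
    have "monoh W k g = Poly_Mapping.single (cls W g i) 1 + (\<Sum>l\<in>{1..k} - {i}. Poly_Mapping.single (cls W g l) 1)"
      unfolding monoh_def by (rule sum.remove) (use iK in auto)
    also have "(\<Sum>l\<in>{1..k} - {i}. Poly_Mapping.single (cls W g l) (1::nat)) =
        Poly_Mapping.single (cls W g j) 1 + (\<Sum>l\<in>?K'. Poly_Mapping.single (cls W g l) 1)"
      by (rule sum.remove) (use jK ij in auto)
    finally show ?thesis .
  qed
  have R': "(\<Sum>l\<in>?K'. Poly_Mapping.single (cls W h' l) (1::nat)) = R"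
    unfolding R_def by (rule sum.cong[OF refl]) (simp add: same)
  define a where "a = Poly_Mapping.single (cls W h i) (1::nat) + Poly_Mapping.single (cls W h j) 1"
  define a' where "a' = Poly_Mapping.single (cls W h' i) (1::nat) + Poly_Mapping.single (cls W h' j) 1"
  have mh: "monoh W k h = R + a" using split[of h] unfolding R_def a_def by (simp add: add_ac)
  have mh': "monoh W k h' = R + a'" using split[of h'] R' unfolding a'_def by (simp add: add_ac)
  let ?V = "Vij W h i j"
  define f2 where "f2 = (\<lambda>v. if h v = i then 1 else (2::nat))"
  define g2 where "g2 = (\<lambda>v. if h' v = i then 1 else (2::nat))"
  have c1: "cls ?V f2 1 = cls W h i" "cls ?V f2 2 = cls W h j"
    using ij by (auto simp: cls_def Vij_def f2_def)
  have c2: "cls ?V g2 1 = cls W h' i" "cls ?V g2 2 = cls W h' j"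
    using ij V by (auto simp: cls_def Vij_def g2_def)
  have col_f2: "is_coloring adj ?V 2 f2"
    unfolding is_coloring_def
  proof (intro conjI ballI impI)
    fix v show "f2 v \<in> {1..2}" by (simp add: f2_def)
  next
    fix u v assume u: "u \<in> ?V" and v: "v \<in> ?V" and a: "adj u v"
    have "h u \<noteq> h v" using colh u v a by (auto simp: is_coloring_def Vij_def)
    then show "f2 u \<noteq> f2 v" using u v by (auto simp: f2_def Vij_def)
  qed
  have col_g2: "is_coloring adj ?V 2 g2"
    unfolding is_coloring_def
  proof (intro conjI ballI impI)
    fix v show "g2 v \<in> {1..2}" by (simp add: g2_def)
  next
    fix u v assume u: "u \<in> ?V" and v: "v \<in> ?V" and a: "adj u v"
    have u': "u \<in> Vij W h' i j" and v': "v \<in> Vij W h' i j" using u v V by auto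
    have "h' u \<noteq> h' v" using colh' u' v' a by (auto simp: is_coloring_def Vij_def)
    then show "g2 u \<noteq> g2 v" using u' v' by (auto simp: g2_def Vij_def)
  qed
  have Vd: "?V \<subseteq> {1..d}" using Wd by (auto simp: Vij_def)
  define b where "b = (xcol ?V 2 f2 - xcol ?V 2 g2 :: (nat set, 'a) mpoly)"
  have bgen: "b \<in> {xcol W 2 f - xcol W 2 g | W f g. W \<subseteq> {1..d} \<and> is_coloring adj W 2 f \<and> is_coloring adj W 2 g}"
    unfolding b_def using Vd col_f2 col_g2 by blast
  have beq: "b = Poly_Mapping.single a 1 - Poly_Mapping.single a' 1"
    unfolding b_def xcol_eq monoh2 c1 c2 a_def a'_def ..
  have rRG: "(Poly_Mapping.single R 1 :: (nat set, 'a) mpoly) \<in> RG d adj"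
  proof -
    have "Poly_Mapping.keys R \<subseteq> (\<Union>l\<in>?K'. Poly_Mapping.keys (Poly_Mapping.single (cls W h l) (1::nat)))"
      unfolding R_def by (rule keys_sum)
    also have "\<dots> \<subseteq> stable_sets d adj" using stable_cls[OF colh Wd] by auto
    finally show ?thesis by (simp add: RG_def)
  qed
  have "(xcol W k h - xcol W k h' :: (nat set, 'a) mpoly) = Poly_Mapping.single R 1 * b + 0"
    unfolding xcol_eq mh mh' beq by (simp add: right_diff_distrib mult_single)
  also have "\<dots> \<in> J_G d adj"
    unfolding J_G_def by (rule ideal_gen.step[OF rRG bgen ideal_gen.zero])
  finally show ?thesis .
qed

lemma step_J:
  assumes Wd: "W \<subseteq> {1..d}" and st: "kempe_step adj W k h h'"
  shows "(xcol W k h - xcol W k h' :: (nat set, 'a::field) mpoly) \<in> J_G d adj"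
proof -
  have colh: "is_coloring adj W k h" and colh': "is_coloring adj W k h'"
    using st by (auto simp: kempe_step_def)
  obtain i j u where ij: "1 \<le> i" "i < j" "j \<le> k" and u: "u \<in> {v\<in>W. h v = i \<or> h v = j}"
    and h': "\<And>v. h' v = (if v \<in> component_of adj {v\<in>W. h v = i \<or> h v = j} u then swap_colors i j (h v) else h v)"
    using st unfolding kempe_step_def Let_def by blast
  let ?C = "component_of adj {v\<in>W. h v = i \<or> h v = j} u"
  have CV: "?C \<subseteq> {v\<in>W. h v = i \<or> h v = j}" using component_sub[OF u] .
  have same: "cls W h' l = cls W h l" if "l \<noteq> i" "l \<noteq> j" for l
  proof -
    have "h' v = l \<longleftrightarrow> h v = l" if "v \<in> W" for v
    proof (cases "v \<in> ?C")
      case True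
      then have "h v = i \<or> h v = j" using CV by auto
      then show ?thesis using True h'[of v] \<open>l \<noteq> i\<close> \<open>l \<noteq> j\<close> by (auto simp: swap_colors_def)
    next
      case False
      then show ?thesis using h'[of v] by simp
    qed
    then show ?thesis by (auto simp: cls_def)
  qed
  have V: "Vij W h' i j = Vij W h i j"
  proof -
    have "(h' v = i \<or> h' v = j) \<longleftrightarrow> (h v = i \<or> h v = j)" for v
      using h'[of v] by (auto simp: swap_colors_def)
    then show ?thesis by (auto simp: Vij_def)
  qed
  show ?thesis
    by (rule diff_J[OF Wd colh colh' _ _ _ same V]) (use ij in auto)
qed

lemma xcol_cong:
  assumes "\<forall>v\<in>W. h v = g v"
  shows "xcol W k h = xcol W k g"
proof -
  have "{v\<in>W. h v = l} = {v\<in>W. g v = l}" for l using assms by auto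
  then show ?thesis unfolding xcol_def by simp
qed

lemma i_to_iii:
  assumes Wd: "W \<subseteq> {1..d}" and ke: "kempe_equiv adj W k f g"
  shows "(xcol W k f - xcol W k g :: (nat set, 'a::field) mpoly) \<in> J_G d adj"
proof -
  obtain h where h: "(kempe_step adj W k)\<^sup>*\<^sup>* f h" "\<forall>v\<in>W. h v = g v"
    using ke by (auto simp: kempe_equiv_def)
  have "(xcol W k f - xcol W k h :: (nat set, 'a) mpoly) \<in> J_G d adj"
    using h(1)
  proof (induction rule: rtranclp_induct)
    case base
    then show ?case unfolding J_G_def using ideal_gen.zero by simp
  next
    case (step y z)
    have "(xcol W k y - xcol W k z :: (nat set, 'a) mpoly) \<in> J_G d adj"
      using step_J[OF Wd step.hyps(2)] .
    then have "(xcol W k f - xcol W k y) + (xcol W k y - xcol W k z :: (nat set, 'a) mpoly) \<in> J_G d adj"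
      using step.IH unfolding J_G_def by (rule ideal_add[rotated])
    then show ?case by simp
  qed
  moreover have "(xcol W k h :: (nat set, 'a) mpoly) = xcol W k g" by (rule xcol_cong[OF h(2)])
  ultimately show ?thesis by simp
qed

lemma ind_partition:
  assumes "is_coloring adj W 2 f"
  shows "ind (cls W f 1) v + ind (cls W f 2) v = ind W v"
  using assms by (auto simp: ind_def cls_def is_coloring_def)

lemma gen_in_I2:
  assumes Wd: "W \<subseteq> {1..d}" and cf: "is_coloring adj W 2 f" and cg: "is_coloring adj W 2 g"
  shows "(xcol W 2 f - xcol W 2 g :: (nat set, 'a::field) mpoly) \<in> {p \<in> I_G d adj. homogeneous_deg 2 p}"
proof -
  define m1 where "m1 = monoh W 2 f"
  define m2 where "m2 = monoh W 2 g"
  have p: "(xcol W 2 f - xcol W 2 g :: (nat set, 'a) mpoly) = Poly_Mapping.single m1 1 - Poly_Mapping.single m2 1"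
    by (simp add: xcol_eq m1_def m2_def)
  have kp: "Poly_Mapping.keys (Poly_Mapping.single m1 1 - Poly_Mapping.single m2 (1::'a)) \<subseteq> {m1, m2}"
    using keys_diff[of "Poly_Mapping.single m1 (1::'a)" "Poly_Mapping.single m2 1"] by auto
  have st1: "Poly_Mapping.keys m1 \<subseteq> stable_sets d adj" unfolding m1_def by (rule keys_monoh_stable[OF cf Wd])
  have st2: "Poly_Mapping.keys m2 \<subseteq> stable_sets d adj" unfolding m2_def by (rule keys_monoh_stable[OF cg Wd])
  have RG: "Poly_Mapping.single m1 1 - Poly_Mapping.single m2 (1::'a) \<in> RG d adj"
    unfolding RG_def using kp st1 st2 by blast
  have deg: "(\<Sum>x\<in>Poly_Mapping.keys m. Poly_Mapping.lookup m x) = 2" if "m = m1 \<or> m = m2" for m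
  proof -
    have "size (ms m) = 2" using that by (auto simp: m1_def m2_def monoh2)
    then show ?thesis by (simp add: size_ms)
  qed
  have hom: "homogeneous_deg 2 (Poly_Mapping.single m1 1 - Poly_Mapping.single m2 (1::'a))"
    unfolding homogeneous_deg_def using kp deg by blast
  have fin: "finite (cls W f 1)" "finite (cls W f 2)" "finite (cls W g 1)" "finite (cls W g 2)"
    using stable_finite[OF stable_cls[OF cf Wd]] stable_finite[OF stable_cls[OF cg Wd]] by auto
  have E: "Emon m1 = Emon m2"
    unfolding m1_def m2_def monoh2
    by (rule Ex2_eq[OF fin]) (rule trans[OF ind_partition[OF cf] ind_partition[OF cg, symmetric]])
  have pi0: "(pi_map (Poly_Mapping.single m1 1 - Poly_Mapping.single m2 (1::'a)) :: (nat option, 'a) mpoly) = 0"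
  proof (cases "m1 = m2")
    case True
    then show ?thesis by (simp add: pi_map_def)
  next
    case False
    show ?thesis
    proof (rule poly_mapping_eqI)
      fix w
      have "Poly_Mapping.lookup (pi_map (Poly_Mapping.single m1 1 - Poly_Mapping.single m2 (1::'a)) :: (nat option, 'a) mpoly) w
         = (\<Sum>m\<in>{m\<in>{m1, m2}. Emon m = w}. Poly_Mapping.lookup (Poly_Mapping.single m1 1 - Poly_Mapping.single m2 (1::'a)) m)"
        by (rule lookup_pi_map) (use kp in auto)
      also have "\<dots> = 0"
      proof (cases "Emon m1 = w")
        case True
        then have "{m\<in>{m1, m2}. Emon m = w} = {m1, m2}" using E by auto
        then show ?thesis using False by (simp add: lookup_minus lookup_single when_def)
      next
        case F2: False
        then have "{m\<in>{m1, m2}. Emon m = w} = {}" using E by auto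
        then show ?thesis by (metis sum.empty)
      qed
      finally show "Poly_Mapping.lookup (pi_map (Poly_Mapping.single m1 1 - Poly_Mapping.single m2 (1::'a)) :: (nat option, 'a) mpoly) w
         = Poly_Mapping.lookup 0 w" by simp
    qed
  qed
  show ?thesis unfolding p I_G_def using RG hom pi0 by blast
qed

lemma gens_sub:
  "{xcol W 2 f - xcol W 2 g :: (nat set, 'a::field) mpoly |W f g. W \<subseteq> {1..d} \<and> is_coloring adj W 2 f \<and> is_coloring adj W 2 g}
    \<subseteq> {p \<in> I_G d adj. homogeneous_deg 2 p}"
proof
  fix x assume "x \<in> {xcol W 2 f - xcol W 2 g :: (nat set, 'a) mpoly |W f g. W \<subseteq> {1..d} \<and> is_coloring adj W 2 f \<and> is_coloring adj W 2 g}"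
  then obtain W f g where "x = xcol W 2 f - xcol W 2 g" "W \<subseteq> {1..d}" "is_coloring adj W 2 f" "is_coloring adj W 2 g"
    by blast
  then show "x \<in> {p \<in> I_G d adj. homogeneous_deg 2 p}" using gen_in_I2 by blast
qed

lemma iii_to_ii:
  assumes "(q :: (nat set, 'a::field) mpoly) \<in> J_G d adj"
  shows "q \<in> I_G2_ideal d adj"
  using ideal_mono[OF assms[unfolded J_G_def] gens_sub] unfolding I_G2_ideal_def .


theorem theorem5p1:
  fixes d k :: nat and adj :: "nat \<Rightarrow> nat \<Rightarrow> bool" and W :: "nat set"
    and f g :: "nat \<Rightarrow> nat"
  assumes "simple_graph_on d adj"
    and "1 \<le> k"
    and "W \<subseteq> {1..d}"
    and "is_coloring adj W k f" and "is_coloring adj W k g"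
  shows "(kempe_equiv adj W k f g
            \<longleftrightarrow> (xcol W k f - xcol W k g :: (nat set, 'a::field) mpoly) \<in> I_G2_ideal d adj)
       \<and> ((xcol W k f - xcol W k g :: (nat set, 'a::field) mpoly) \<in> I_G2_ideal d adj
            \<longleftrightarrow> (xcol W k f - xcol W k g :: (nat set, 'a) mpoly) \<in> J_G d adj)"
proof -
  have sym: "\<And>u v. adj u v \<Longrightarrow> adj v u" using assms(1) by (simp add: simple_graph_on_def)
  have a: "(xcol W k f - xcol W k g :: (nat set, 'a) mpoly) \<in> J_G d adj" if "kempe_equiv adj W k f g"
    using i_to_iii[OF assms(3) that] .
  have b: "(xcol W k f - xcol W k g :: (nat set, 'a) mpoly) \<in> I_G2_ideal d adj"
    if "(xcol W k f - xcol W k g :: (nat set, 'a) mpoly) \<in> J_G d adj"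
    using iii_to_ii[OF that] .
  have c: "kempe_equiv adj W k f g"
    if "(xcol W k f - xcol W k g :: (nat set, 'a) mpoly) \<in> I_G2_ideal d adj"
    using ii_to_i[OF sym assms(3) assms(4) assms(5) that] .
  show ?thesis using a b c by blast
qed

end
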